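(* Let $m,n\in\mathbb{N}$ with $m\ge2$, and $b_{n,i}(x)=\binom ni x^i(1-x)^{n-i}$ for $i=0,\dots,n$. Then \[ \sum_{i_1,\dots,i_m=0}^n\Bigl(\sum_{l=1}^m b_{n,i_1}(x_l)b_{n,i_2}(x_l)\cdots b_{n,i_m}(x_l)\;-\;m\,b_{n,i_1}(x_1)b_{n,i_2}(x_2)\cdots b_{n,i_m}(x_m)\Bigr)f\Bigl(\frac{i_1+\dots+i_m}{mn}\Bigr)\ge0 \] for every convex continuous function $f:[0,1]\to\mathbb{R}$ and all $x_1,\dots,x_m\in[0,1]$. *)

theory Defs
  imports "HOL-Analysis.Analysis"
begin

definition bern :: "nat \<Rightarrow> nat \<Rightarrow> real \<Rightarrow> real" where
  "bern n i x = real (n choose i) * x ^ i * (1 - x) ^ (n - i)"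

end

theory Submission imports Defs begin

definition Ep :: "nat \<Rightarrow> 'a set \<Rightarrow> ('a \<Rightarrow> real) \<Rightarrow> (nat \<Rightarrow> real) \<Rightarrow> real" where
  "Ep n A y G = (\<Sum>i\<in>PiE A (\<lambda>_. {0..n}). (\<Prod>j\<in>A. bern n (i j) (y j)) * G (\<Sum>j\<in>A. i j))"

lemma Ep_empty: "Ep n {} y G = G 0"
  by (simp add: Ep_def)

lemma Ep_insert:
  assumes "finite A" "a \<notin> A"
  shows "Ep n (insert a A) y G = (\<Sum>t\<in>{0..n}. bern n t (y a) * Ep n A y (\<lambda>s. G (s + t)))"
proof -
  have "Ep n (insert a A) y G = (\<Sum>p\<in>{0..n} \<times> PiE A (\<lambda>_. {0..n}).
     (\<Prod>j\<in>insert a A. bern n (((snd p)(a := fst p)) j) (y j)) * G (\<Sum>j\<in>insert a A. ((snd p)(a := fst p)) j))"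
    unfolding Ep_def PiE_insert_eq
    by (subst sum.reindex[OF inj_combinator[OF assms(2)]]) (simp add: case_prod_beta)
  also have "\<dots> = (\<Sum>p\<in>{0..n} \<times> PiE A (\<lambda>_. {0..n}).
     bern n (fst p) (y a) * ((\<Prod>j\<in>A. bern n (snd p j) (y j)) * G ((\<Sum>j\<in>A. snd p j) + fst p)))"
  proof (rule sum.cong[OF refl])
    fix p assume "p \<in> {0..n} \<times> PiE A (\<lambda>_. {0..n})"
    have 1: "(\<Prod>j\<in>A. bern n (((snd p)(a := fst p)) j) (y j)) = (\<Prod>j\<in>A. bern n (snd p j) (y j))"
      using assms(2) by (intro prod.cong) auto
    have 2: "(\<Sum>j\<in>A. ((snd p)(a := fst p)) j) = (\<Sum>j\<in>A. snd p j)"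
      using assms(2) by (intro sum.cong) auto
    show "(\<Prod>j\<in>insert a A. bern n (((snd p)(a := fst p)) j) (y j)) * G (\<Sum>j\<in>insert a A. ((snd p)(a := fst p)) j) =
      bern n (fst p) (y a) * ((\<Prod>j\<in>A. bern n (snd p j) (y j)) * G ((\<Sum>j\<in>A. snd p j) + fst p))"
      using assms 1 2 by (simp add: add.commute)
  qed
  also have "\<dots> = (\<Sum>t\<in>{0..n}. bern n t (y a) * Ep n A y (\<lambda>s. G (s + t)))"
    unfolding Ep_def sum_distrib_left sum.cartesian_product by (simp add: case_prod_beta)
  finally show ?thesis .
qed

lemma bern_nonneg: "u \<in> {0..1} \<Longrightarrow> bern n t u \<ge> 0"
  by (auto simp: bern_def)

lemma bern_zero_gt: "t > n \<Longrightarrow> bern n t u = 0"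
  by (simp add: bern_def)

lemma bern_Suc_0: "bern (Suc n) 0 u = (1 - u) * bern n 0 u"
  by (simp add: bern_def)

lemma bern_Suc_Suc: "bern (Suc n) (Suc s) u = (1 - u) * bern n (Suc s) u + u * bern n s u"
proof (cases "s < n")
  case True
  then obtain d where d: "n = s + Suc d" by (metis add_Suc_right less_natE)
  show ?thesis unfolding bern_def d
    by (simp add: field_simps)
next
  case False
  then show ?thesis
    by (cases "s = n") (auto simp: bern_def binomial_eq_0)
qed

definition Bx :: "nat \<Rightarrow> real \<Rightarrow> (nat \<Rightarrow> real) \<Rightarrow> real" where
  "Bx n u K = (\<Sum>t\<le>n. bern n t u * K t)"

lemma Bx_Suc: "Bx (Suc n) u K = Bx n u (\<lambda>t. (1 - u) * K t + u * K (Suc t))"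
proof -
  have ext: "Bx n u g = (\<Sum>t\<le>Suc n. bern n t u * g t)" for g
    by (simp add: Bx_def bern_zero_gt)
  have "Bx (Suc n) u K = bern (Suc n) 0 u * K 0 + (\<Sum>s\<le>n. bern (Suc n) (Suc s) u * K (Suc s))"
    unfolding Bx_def by (subst sum.atMost_Suc_shift) simp
  also have "\<dots> = (1 - u) * (bern n 0 u * K 0 + (\<Sum>s\<le>n. bern n (Suc s) u * K (Suc s)))
        + u * (\<Sum>s\<le>n. bern n s u * K (Suc s))"
  proof -
    have "(\<Sum>s\<le>n. bern (Suc n) (Suc s) u * K (Suc s)) = (\<Sum>s\<le>n. (1-u)*(bern n (Suc s) u * K(Suc s)) + u*(bern n s u * K(Suc s)))"
      by (simp add: bern_Suc_Suc algebra_simps)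
    also have "\<dots> = (1-u)*(\<Sum>s\<le>n. bern n (Suc s) u * K(Suc s)) + u*(\<Sum>s\<le>n. bern n s u * K(Suc s))"
      by (simp add: sum.distrib sum_distrib_left)
    finally show ?thesis by (simp add: bern_Suc_0 algebra_simps)
  qed
  also have "bern n 0 u * K 0 + (\<Sum>s\<le>n. bern n (Suc s) u * K (Suc s)) = (\<Sum>t\<le>Suc n. bern n t u * K t)"
    by (subst sum.atMost_Suc_shift) simp
  also have "(\<Sum>t\<le>Suc n. bern n t u * K t) = Bx n u K" by (simp add: ext)
  also have "(1 - u) * Bx n u K + u * (\<Sum>s\<le>n. bern n s u * K (Suc s)) = Bx n u (\<lambda>t. (1 - u) * K t + u * K (Suc t))"
    unfolding Bx_def by (simp add: ring_distribs sum.distrib sum_distrib_left mult.left_commute)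
  finally show ?thesis .
qed

lemma Bx_0: "Bx 0 u K = K 0" by (simp add: Bx_def bern_def)

lemma Bx_mono_fun: "u \<in> {0..1} \<Longrightarrow> (\<And>t. K1 t \<le> K2 t) \<Longrightarrow> Bx n u K1 \<le> Bx n u K2"
  unfolding Bx_def by (intro sum_mono mult_left_mono) (auto simp: bern_nonneg)

lemma Bx_diff: "Bx n u (\<lambda>t. K1 t - K2 t) = Bx n u K1 - Bx n u K2"
  unfolding Bx_def by (simp add: algebra_simps sum_subtractf)

lemma Bx_cmult: "Bx n u (\<lambda>t. c * K t) = c * Bx n u K"
  unfolding Bx_def by (simp add: algebra_simps sum_distrib_left)

lemma Bx_sum: "Bx n u (\<lambda>t. \<Sum>l\<in>L. K l t) = (\<Sum>l\<in>L. Bx n u (K l))"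
  unfolding Bx_def by (simp add: sum_distrib_left sum.swap[of _ _ L])

definition incr :: "(nat \<Rightarrow> real) \<Rightarrow> bool" where
  "incr K \<longleftrightarrow> (\<forall>t. K t \<le> K (Suc t))"

lemma Bx_mono_u:
  assumes "u \<in> {0..1}" "v \<in> {0..1}" "u \<le> v" "incr K"
  shows "Bx n u K \<le> Bx n v K"
  using assms(4)
proof (induction n arbitrary: K)
  case 0 then show ?case by (simp add: Bx_0)
next
  case (Suc n)
  let ?Ku = "\<lambda>t. (1 - u) * K t + u * K (Suc t)"
  let ?Kv = "\<lambda>t. (1 - v) * K t + v * K (Suc t)"
  have i: "K t \<le> K (Suc t)" for t using Suc.prems by (simp add: incr_def)
  have "incr ?Ku"
    unfolding incr_def using assms(1) i
    by (auto intro!: add_mono mult_left_mono)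
  then have "Bx n u ?Ku \<le> Bx n v ?Ku" by (rule Suc.IH)
  also have "\<dots> \<le> Bx n v ?Kv"
  proof (rule Bx_mono_fun[OF assms(2)])
    fix t
    have "(v - u) * K t \<le> (v - u) * K (Suc t)" using assms(3) i by (intro mult_left_mono) auto
    then show "?Ku t \<le> ?Kv t" by (simp add: algebra_simps)
  qed
  finally show ?case by (simp add: Bx_Suc)
qed

fun Rr :: "nat \<Rightarrow> nat \<Rightarrow> real \<Rightarrow> (nat \<Rightarrow> real) \<Rightarrow> real" where
  "Rr n 0 u G = G 0"
| "Rr n (Suc k) u G = Bx n u (\<lambda>t. Rr n k u (\<lambda>s. G (s + t)))"

lemma Rr_mono_fun: "u \<in> {0..1} \<Longrightarrow> (\<And>s. G1 s \<le> G2 s) \<Longrightarrow> Rr n k u G1 \<le> Rr n k u G2"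
  by (induction k arbitrary: G1 G2) (auto intro!: Bx_mono_fun)

lemma Rr_diff: "Rr n k u (\<lambda>s. G1 s - G2 s) = Rr n k u G1 - Rr n k u G2"
  by (induction k arbitrary: G1 G2) (auto simp: Bx_diff)

lemma Rr_mono_u:
  assumes "u \<in> {0..1}" "v \<in> {0..1}" "u \<le> v" "incr G"
  shows "Rr n k u G \<le> Rr n k v G"
  using assms(4)
proof (induction k arbitrary: G)
  case 0 then show ?case by simp
next
  case (Suc k)
  have i: "G t \<le> G (Suc t)" for t using Suc.prems by (simp add: incr_def)
  have "Bx n u (\<lambda>t. Rr n k u (\<lambda>s. G (s + t))) \<le> Bx n u (\<lambda>t. Rr n k v (\<lambda>s. G (s + t)))"
    by (rule Bx_mono_fun[OF assms(1)], rule Suc.IH) (simp add: incr_def i)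
  also have "\<dots> \<le> Bx n v (\<lambda>t. Rr n k v (\<lambda>s. G (s + t)))"
    by (rule Bx_mono_u[OF assms(1-3)]) (use assms(2) in \<open>auto simp: incr_def intro!: Rr_mono_fun i\<close>)
  finally show ?case by simp
qed

lemma Ep_insert':
  assumes "finite A" "a \<notin> A"
  shows "Ep n (insert a A) y G = Bx n (y a) (\<lambda>t. Ep n A y (\<lambda>s. G (s + t)))"
  using Ep_insert[OF assms] by (simp add: Bx_def atLeast0AtMost)

lemma Ep_const: "finite B \<Longrightarrow> Ep n B (\<lambda>_. u) G = Rr n (card B) u G"
  by (induction B arbitrary: G rule: finite_induct) (simp_all add: Ep_empty Ep_insert')

lemma Ep_cong: "(\<And>j. j \<in> A \<Longrightarrow> y j = y' j) \<Longrightarrow> Ep n A y G = Ep n A y' G"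
  unfolding Ep_def by (intro sum.cong refl arg_cong2[where f="(*)"] prod.cong) auto

definition dconv :: "(nat \<Rightarrow> real) \<Rightarrow> bool" where
  "dconv F \<longleftrightarrow> (\<forall>k. 2 * F (Suc k) \<le> F k + F (Suc (Suc k)))"

definition Phi :: "nat \<Rightarrow> nat \<Rightarrow> (nat \<Rightarrow> real) \<Rightarrow> real \<Rightarrow> real \<Rightarrow> real" where
  "Phi n m F u v = Bx n v (\<lambda>t. Rr n m u (\<lambda>s. F (s + t)))"

lemma pair_aux:
  assumes "u \<in> {0..1}" "v \<in> {0..1}" "u \<le> v" "dconv F"
  shows "Phi n m F u v + Phi n m F v u \<le> Phi n m F u u + Phi n m F v v"
proof -
  define H where "H t = Rr n m u (\<lambda>s. F (s + t)) - Rr n m v (\<lambda>s. F (s + t))" for t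
  have "incr (\<lambda>t. - H t)"
    unfolding incr_def
  proof
    fix t
    have "incr (\<lambda>s. F (s + Suc t) - F (s + t))"
      using assms(4) unfolding incr_def dconv_def
      by (auto simp: algebra_simps)
    then have "Rr n m u (\<lambda>s. F (s + Suc t) - F (s + t)) \<le> Rr n m v (\<lambda>s. F (s + Suc t) - F (s + t))"
      using assms by (intro Rr_mono_u) auto
    then show "- H t \<le> - H (Suc t)"
      unfolding H_def Rr_diff by simp
  qed
  then have "Bx n u (\<lambda>t. -1 * H t) \<le> Bx n v (\<lambda>t. -1 * H t)"
    using assms by (intro Bx_mono_u) auto
  then have "Bx n v H \<le> Bx n u H" unfolding Bx_cmult by simp
  then show ?thesis
    unfolding Phi_def using Bx_diff[of n u "\<lambda>t. Rr n m u (\<lambda>s. F (s + t))" "\<lambda>t. Rr n m v (\<lambda>s. F (s + t))"]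
      Bx_diff[of n v "\<lambda>t. Rr n m u (\<lambda>s. F (s + t))" "\<lambda>t. Rr n m v (\<lambda>s. F (s + t))"]
    unfolding H_def by linarith
qed

lemma pair:
  assumes "u \<in> {0..1}" "v \<in> {0..1}" "dconv F"
  shows "Phi n m F u v + Phi n m F v u \<le> Phi n m F u u + Phi n m F v v"
proof (cases "u \<le> v")
  case True then show ?thesis using pair_aux[OF assms(1,2) _ assms(3)] by simp
next
  case False then show ?thesis using pair_aux[OF assms(2,1) _ assms(3), of n m] by simp
qed

lemma swap_diff:
  assumes "finite A"
  shows "(\<Sum>k\<in>A. \<Sum>l\<in>A-{k}. g k l) = (\<Sum>k\<in>A. \<Sum>l\<in>A-{k}. g l k)"
proof -
  have e: "A - {k} = {l\<in>A. k \<noteq> l}" for k by auto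
  have e2: "A - {k} = {l\<in>A. l \<noteq> k}" for k by auto
  show ?thesis unfolding e
    using sum.swap_restrict[OF assms assms, of g "\<lambda>k l. k \<noteq> l"] by (simp add: e2[symmetric] e[symmetric])
qed

lemma core:
  "finite A \<Longrightarrow> card A = m \<Longrightarrow> (\<forall>j\<in>A. y j \<in> {0..1}) \<Longrightarrow> dconv F \<Longrightarrow>
   real m * Ep n A y F \<le> (\<Sum>l\<in>A. Ep n A (\<lambda>_. y l) F)"
proof (induction m arbitrary: A y F)
  case 0 then show ?case by simp
next
  case (Suc m)
  show ?case
  proof (cases "m = 0")
    case True
    then obtain a where A: "A = {a}" using Suc.prems(2) card_1_singletonE by auto
    have "Ep n A y F = Ep n A (\<lambda>_. y a) F" by (rule Ep_cong) (simp add: A)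
    then show ?thesis using True A by simp
  next
    case False
    have yk: "y k \<in> {0..1}" if "k \<in> A" for k using Suc.prems(3) that by auto
    have fact1: "real m * Ep n A y F \<le> (\<Sum>l\<in>A-{k}. Phi n m F (y l) (y k))" if k: "k \<in> A" for k
    proof -
      have Ak: "A = insert k (A - {k})" using k by auto
      have fin: "finite (A - {k})" using Suc.prems(1) by auto
      have cd: "card (A - {k}) = m" using Suc.prems(2) k by simp
      have dc: "dconv (\<lambda>s. F (s + t))" for t using Suc.prems(4) unfolding dconv_def by simp
      have "real m * Ep n A y F = Bx n (y k) (\<lambda>t. real m * Ep n (A - {k}) y (\<lambda>s. F (s + t)))"
        by (subst Ak, subst Ep_insert'[OF fin]) (auto simp: Bx_cmult)
      also have "\<dots> \<le> Bx n (y k) (\<lambda>t. \<Sum>l\<in>A-{k}. Ep n (A - {k}) (\<lambda>_. y l) (\<lambda>s. F (s + t)))"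
        by (rule Bx_mono_fun[OF yk[OF k]], rule Suc.IH[OF fin cd _ dc]) (use Suc.prems(3) in auto)
      also have "\<dots> = (\<Sum>l\<in>A-{k}. Phi n m F (y l) (y k))"
        by (simp add: Bx_sum Ep_const[OF fin] cd Phi_def)
      finally show ?thesis .
    qed
    let ?S = "\<Sum>k\<in>A. \<Sum>l\<in>A-{k}. Phi n m F (y l) (y k)"
    let ?D = "\<Sum>l\<in>A. Phi n m F (y l) (y l)"
    have "(\<Sum>k\<in>A. real m * Ep n A y F) \<le> ?S"
      by (rule sum_mono) (rule fact1)
    then have L: "real (Suc m) * (real m * Ep n A y F) \<le> ?S"
      using Suc.prems(2) by simp
    have S2: "?S = (\<Sum>k\<in>A. \<Sum>l\<in>A-{k}. Phi n m F (y k) (y l))"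
      by (rule swap_diff[OF Suc.prems(1)])
    have "?S + ?S \<le> (\<Sum>k\<in>A. \<Sum>l\<in>A-{k}. Phi n m F (y k) (y k) + Phi n m F (y l) (y l))"
    proof -
      have "?S + ?S = ?S + (\<Sum>k\<in>A. \<Sum>l\<in>A-{k}. Phi n m F (y k) (y l))" using S2 by simp
      also have "\<dots> = (\<Sum>k\<in>A. \<Sum>l\<in>A-{k}. Phi n m F (y l) (y k) + Phi n m F (y k) (y l))"
        by (simp add: sum.distrib)
      also have "\<dots> \<le> (\<Sum>k\<in>A. \<Sum>l\<in>A-{k}. Phi n m F (y k) (y k) + Phi n m F (y l) (y l))"
        by (intro sum_mono) (use yk Suc.prems(4) pair in \<open>auto simp: add.commute\<close>)
      finally show ?thesis .
    qed
    also have "\<dots> = (\<Sum>k\<in>A. \<Sum>l\<in>A-{k}. Phi n m F (y k) (y k)) + (\<Sum>k\<in>A. \<Sum>l\<in>A-{k}. Phi n m F (y l) (y l))"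
      by (simp add: sum.distrib)
    also have "(\<Sum>k\<in>A. \<Sum>l\<in>A-{k}. Phi n m F (y l) (y l)) = (\<Sum>k\<in>A. \<Sum>l\<in>A-{k}. Phi n m F (y k) (y k))"
      by (rule swap_diff[OF Suc.prems(1)])
    also have "(\<Sum>k\<in>A. \<Sum>l\<in>A-{k}. Phi n m F (y k) (y k)) = real m * ?D"
      using Suc.prems(1,2) by (simp add: sum_distrib_left card_Diff_singleton)
    finally have "?S \<le> real m * ?D" by simp
    have D: "(\<Sum>l\<in>A. Ep n A (\<lambda>_. y l) F) = ?D"
      using Suc.prems(1,2) by (simp add: Ep_const Phi_def)
    have "real m * (real (Suc m) * Ep n A y F) \<le> real m * ?D"
      using L \<open>?S \<le> real m * ?D\<close> by (simp add: algebra_simps)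
    then show ?thesis using False D by simp
  qed
qed

lemma dconv_ext:
  assumes cf: "convex_on {0..1} f" and N: "N \<ge> 1"
  shows "dconv (\<lambda>k. if k \<le> N then f (real k / real N) else f 1 + real (k - N) * (f 1 - f (real (N - 1) / real N)))"
  unfolding dconv_def
proof
  fix k
  let ?F = "\<lambda>k. if k \<le> N then f (real k / real N) else f 1 + real (k - N) * (f 1 - f (real (N - 1) / real N))"
  show "2 * ?F (Suc k) \<le> ?F k + ?F (Suc (Suc k))"
  proof (cases "Suc (Suc k) \<le> N")
    case True
    have Np: "real N > 0" using N by simp
    have "f ((1 - 1/2) *\<^sub>R (real k / real N) + (1/2) *\<^sub>R (real (Suc (Suc k)) / real N))
        \<le> (1 - 1/2) * f (real k / real N) + (1/2) * f (real (Suc (Suc k)) / real N)"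
      by (rule convex_onD[OF cf]) (use True Np in \<open>auto simp: field_simps\<close>)
    moreover have "(1 - 1/2) *\<^sub>R (real k / real N) + (1/2) *\<^sub>R (real (Suc (Suc k)) / real N) = real (Suc k) / real N"
      using Np by (simp add: field_simps)
    ultimately show ?thesis using True by simp
  next
    case False
    show ?thesis
    proof (cases "Suc k = N")
      case True
      then have "k = N - 1" by simp
      then show ?thesis using True N by simp
    next
      case False
      then have "k \<ge> N" using \<open>\<not> Suc (Suc k) \<le> N\<close> by simp
      then show ?thesis using N by (simp add: Suc_diff_le of_nat_diff algebra_simps)
    qed
  qed
qed

lemma sum_le_mn: fixes i :: "nat \<Rightarrow> nat" shows "i \<in> PiE {1..m} (\<lambda>_. {0..n}) \<Longrightarrow> (\<Sum>j = 1..m. i j) \<le> m * n"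
proof -
  assume "i \<in> PiE {1..m} (\<lambda>_. {0..n})"
  then have "(\<Sum>j = 1..m. i j) \<le> (\<Sum>j = 1..m. n)" using sum_mono[of "{1..m}" i "\<lambda>_. n"] by (auto simp: PiE_iff)
  then show ?thesis by simp
qed

theorem theorem4:
  fixes m n :: nat and f :: "real \<Rightarrow> real" and x :: "nat \<Rightarrow> real"
  assumes "m \<ge> 2"
    and "convex_on {0..1} f"
    and "continuous_on {0..1} f"
    and "\<And>l. l \<in> {1..m} \<Longrightarrow> x l \<in> {0..1}"
  shows "(\<Sum>i \<in> PiE {1..m} (\<lambda>_. {0..n}).
            ((\<Sum>l = 1..m. \<Prod>j = 1..m. bern n (i j) (x l))
             - real m * (\<Prod>j = 1..m. bern n (i j) (x j)))
            * f (real (\<Sum>j = 1..m. i j) / (real m * real n))) \<ge> 0"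
proof -
  define N where "N = m * n"
  define F where "F = (if n = 0 then (\<lambda>_. f 0) else
     (\<lambda>k. if k \<le> N then f (real k / real N) else f 1 + real (k - N) * (f 1 - f (real (N - 1) / real N))))"
  have dF: "dconv F"
  proof (cases "n = 0")
    case True then show ?thesis by (simp add: F_def dconv_def)
  next
    case False
    then have "N \<ge> 1" using assms(1) by (simp add: N_def)
    then show ?thesis using dconv_ext[OF assms(2)] False by (simp add: F_def)
  qed
  let ?P = "PiE {1..m} (\<lambda>_. {0..n})"
  have "(\<Sum>i \<in> ?P. ((\<Sum>l = 1..m. \<Prod>j = 1..m. bern n (i j) (x l))
             - real m * (\<Prod>j = 1..m. bern n (i j) (x j)))
            * f (real (\<Sum>j = 1..m. i j) / (real m * real n)))
      = (\<Sum>i \<in> ?P. ((\<Sum>l = 1..m. \<Prod>j = 1..m. bern n (i j) (x l))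
             - real m * (\<Prod>j = 1..m. bern n (i j) (x j))) * F (\<Sum>j = 1..m. i j))"
  proof (rule sum.cong[OF refl])
    fix i assume "i \<in> ?P"
    then have "(\<Sum>j = 1..m. i j) \<le> N" unfolding N_def by (rule sum_le_mn)
    then show "((\<Sum>l = 1..m. \<Prod>j = 1..m. bern n (i j) (x l)) - real m * (\<Prod>j = 1..m. bern n (i j) (x j))) *
        f (real (\<Sum>j = 1..m. i j) / (real m * real n)) =
        ((\<Sum>l = 1..m. \<Prod>j = 1..m. bern n (i j) (x l)) - real m * (\<Prod>j = 1..m. bern n (i j) (x j))) * F (\<Sum>j = 1..m. i j)"
      by (simp add: F_def N_def)
  qed
  also have "\<dots> = (\<Sum>l = 1..m. Ep n {1..m} (\<lambda>_. x l) F) - real m * Ep n {1..m} x F"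
    unfolding Ep_def
    by (simp add: left_diff_distrib sum_subtractf sum_distrib_left sum_distrib_right mult.assoc) (rule sum.swap)
  also have "\<dots> \<ge> 0"
    using core[of "{1..m}" m x F n] dF assms(4) by simp
  finally show ?thesis .
qed

end
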